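(* Let $\tilde{\mathbf{x}}=(x_s)\in(\mathbb{C}^* )^L$ satisfy the K-hexahedron equations. (a) For each $i\in\mathbb{Z}$ let $\alpha_i,\beta_i,\gamma_i\in\{-1,1\}$, and define $\tilde{\mathbf{y}}=(y_s)\in(\mathbb{C}^* )^L$ by $y_{(a,b,c)}=x_{(a,b,c)}$, $y_{(a,b+\frac12,c+\frac12)}=\beta_b\gamma_c\,x_{(a,b+\frac12,c+\frac12)}$, $y_{(a+\frac12,b,c+\frac12)}=\alpha_a\gamma_c\,x_{(a+\frac12,b,c+\frac12)}$, $y_{(a+\frac12,b+\frac12,c)}=\alpha_a\beta_b\,x_{(a+\frac12,b+\frac12,c)}$ for all $(a,b,c)\in\mathbb{Z}^3$. Then $\tilde{\mathbf{y}}$ satisfies the K-hexahedron equations. (b) Conversely, if $\tilde{\mathbf{y}}=(y_s)\in(\mathbb{C}^* )^L$ satisfies the K-hexahedron equations and $y_s=x_s$ for all $s\in\mathbb{Z}^3$, then there exist signs $\alpha_i,\beta_i,\gamma_i\in\{-1,1\}$, $i\in\mathbb{Z}$, such that $\tilde{\mathbf{y}}$ is given by the formulas in (a) for all $(a,b,c)\in\mathbb{Z}^3$.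
   Context: $L=\{(i,j,k)\in\mathbb{R}^3: 2i,2j,2k,i+j+k\in\mathbb{Z}\}$, i.e. $\mathbb{Z}^3$ together with the centers of unit squares with vertices in $\mathbb{Z}^3$. An array $\tilde{\mathbf{x}}=(x_s)\in\mathbb{C}^L$ with $x_s\ne0$ for $s\in\mathbb{Z}^3$ satisfies the K-hexahedron equations if (i) for every $s\in L\setminus\mathbb{Z}^3$, $x_s^2=x_{v_1}x_{v_3}+x_{v_2}x_{v_4}$, where $v_1,v_2,v_3,v_4$ are the vertices in cyclic order of the unit square centered at $s$; and (ii) for every $v\in\mathbb{Z}^3$, writing $z_{ijk}=x_{v+(i,j,k)}$: $z_{1\frac12\frac12}=(z_{\frac120\frac12}z_{\frac12\frac120}+z_{0\frac12\frac12}z_{100})/z_{000}$, $z_{\frac121\frac12}=(z_{0\frac12\frac12}z_{\frac12\frac120}+z_{\frac120\frac12}z_{010})/z_{000}$, $z_{\frac12\frac121}=(z_{0\frac12\frac12}z_{\frac120\frac12}+z_{\frac12\frac120}z_{001})/z_{000}$, $z_{111}=(A+2z_{0\frac12\frac12}z_{\frac120\frac12}z_{\frac12\frac120})/z_{000}^2$ with $A=2z_{100}z_{010}z_{001}+z_{000}(z_{100}z_{011}+z_{010}z_{101}+z_{001}z_{110})$. *)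

theory Defs
  imports Complex_Main
begin

text \<open>Points of L are encoded by doubled coordinates: (p,q,r) :: int^3 stands for
  (p/2,q/2,r/2). Thus L corresponds to {(p,q,r). even (p+q+r)}, Z^3 to the all-even
  triples, and face centres to triples with exactly two odd coordinates.
  An array indexed by L is a function int*int*int => complex whose values off L are irrelevant.\<close>

definition inL :: "int \<times> int \<times> int \<Rightarrow> bool" where
  "inL s = (case s of (p, q, r) \<Rightarrow> even (p + q + r))"

definition Khex :: "(int \<times> int \<times> int \<Rightarrow> complex) \<Rightarrow> bool" where
  "Khex x \<longleftrightarrow>
     (\<forall>a b c. x (2*a, 2*b, 2*c) \<noteq> 0) \<and>
     (\<forall>a b c. (x (2*a, 2*b+1, 2*c+1))^2 =
                 x (2*a, 2*b, 2*c) * x (2*a, 2*b+2, 2*c+2) + x (2*a, 2*b+2, 2*c) * x (2*a, 2*b, 2*c+2)) \<and>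
     (\<forall>a b c. (x (2*a+1, 2*b, 2*c+1))^2 =
                 x (2*a, 2*b, 2*c) * x (2*a+2, 2*b, 2*c+2) + x (2*a+2, 2*b, 2*c) * x (2*a, 2*b, 2*c+2)) \<and>
     (\<forall>a b c. (x (2*a+1, 2*b+1, 2*c))^2 =
                 x (2*a, 2*b, 2*c) * x (2*a+2, 2*b+2, 2*c) + x (2*a+2, 2*b, 2*c) * x (2*a, 2*b+2, 2*c)) \<and>
     (\<forall>a b c. let z = (\<lambda>i j k. x (2*a+i, 2*b+j, 2*c+k)) in
        z 2 1 1 = (z 1 0 1 * z 1 1 0 + z 0 1 1 * z 2 0 0) / z 0 0 0 \<and>
        z 1 2 1 = (z 0 1 1 * z 1 1 0 + z 1 0 1 * z 0 2 0) / z 0 0 0 \<and>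
        z 1 1 2 = (z 0 1 1 * z 1 0 1 + z 1 1 0 * z 0 0 2) / z 0 0 0 \<and>
        z 2 2 2 = (2 * z 2 0 0 * z 0 2 0 * z 0 0 2
                    + z 0 0 0 * (z 2 0 0 * z 0 2 2 + z 0 2 0 * z 2 0 2 + z 0 0 2 * z 2 2 0)
                    + 2 * z 0 1 1 * z 1 0 1 * z 1 1 0) / (z 0 0 0)^2)"

definition sign_twist ::
  "(int \<times> int \<times> int \<Rightarrow> complex) \<Rightarrow> (int \<times> int \<times> int \<Rightarrow> complex) \<Rightarrow>
   (int \<Rightarrow> complex) \<Rightarrow> (int \<Rightarrow> complex) \<Rightarrow> (int \<Rightarrow> complex) \<Rightarrow> bool" where
  "sign_twist x y \<alpha> \<beta> \<gamma> \<longleftrightarrow>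
     (\<forall>a b c.
        y (2*a, 2*b, 2*c) = x (2*a, 2*b, 2*c) \<and>
        y (2*a, 2*b+1, 2*c+1) = \<beta> b * \<gamma> c * x (2*a, 2*b+1, 2*c+1) \<and>
        y (2*a+1, 2*b, 2*c+1) = \<alpha> a * \<gamma> c * x (2*a+1, 2*b, 2*c+1) \<and>
        y (2*a+1, 2*b+1, 2*c) = \<alpha> a * \<beta> b * x (2*a+1, 2*b+1, 2*c))"

end

theory Submission
  imports Defs
begin

lemma key:
  fixes t u v w P Q :: complex
  assumes "t \<in> {-1,1}" "u \<in> {-1,1}" "v \<in> {-1,1}" "w \<in> {-1,1}"
    "P \<noteq> 0" "Q \<noteq> 0" "P + Q \<noteq> 0" "t*(P+Q) = v*w*P + u*Q"
  shows "t = u \<and> u = v*w \<and> v = u*w \<and> w = u*v"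
proof -
  have "P*2+Q*2 \<noteq> 0"
  proof -
    have "P*2+Q*2 = (P+Q)*2" by (simp add: algebra_simps)
    thus ?thesis using assms(7) by (metis mult_eq_0_iff zero_neq_numeral)
  qed
  thus ?thesis using assms by (auto simp: algebra_simps)
qed

lemma inL_cases:
  assumes "inL (p,q,r)"
  shows "(even p \<and> even q \<and> even r) \<or> (even p \<and> odd q \<and> odd r) \<or> (odd p \<and> even q \<and> odd r) \<or> (odd p \<and> odd q \<and> even r)"
  using assms unfolding inL_def by auto

lemma st_V: "sign_twist x y \<alpha> \<beta> \<gamma> \<Longrightarrow> even p \<Longrightarrow> even q \<Longrightarrow> even r \<Longrightarrow> y (p,q,r) = x (p,q,r)"
  unfolding sign_twist_def by (elim evenE) auto

lemma st_F1: "sign_twist x y \<alpha> \<beta> \<gamma> \<Longrightarrow> even p \<Longrightarrow> odd q \<Longrightarrow> odd r \<Longrightarrow>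
   y (p,q,r) = \<beta> (q div 2) * \<gamma> (r div 2) * x (p,q,r)"
  unfolding sign_twist_def by (elim evenE oddE) auto

lemma st_F2: "sign_twist x y \<alpha> \<beta> \<gamma> \<Longrightarrow> odd p \<Longrightarrow> even q \<Longrightarrow> odd r \<Longrightarrow>
   y (p,q,r) = \<alpha> (p div 2) * \<gamma> (r div 2) * x (p,q,r)"
  unfolding sign_twist_def by (elim evenE oddE) auto

lemma st_F3: "sign_twist x y \<alpha> \<beta> \<gamma> \<Longrightarrow> odd p \<Longrightarrow> odd q \<Longrightarrow> even r \<Longrightarrow>
   y (p,q,r) = \<alpha> (p div 2) * \<beta> (q div 2) * x (p,q,r)"
  unfolding sign_twist_def by (elim evenE oddE) auto

lemma Khex_facts:
  assumes "Khex x"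
  shows "\<And>a b c. x (2*a, 2*b, 2*c) \<noteq> 0"
    "\<And>a b c. (x (2*a, 2*b+1, 2*c+1))^2 =
                 x (2*a, 2*b, 2*c) * x (2*a, 2*b+2, 2*c+2) + x (2*a, 2*b+2, 2*c) * x (2*a, 2*b, 2*c+2)"
    "\<And>a b c. (x (2*a+1, 2*b, 2*c+1))^2 =
                 x (2*a, 2*b, 2*c) * x (2*a+2, 2*b, 2*c+2) + x (2*a+2, 2*b, 2*c) * x (2*a, 2*b, 2*c+2)"
    "\<And>a b c. (x (2*a+1, 2*b+1, 2*c))^2 =
                 x (2*a, 2*b, 2*c) * x (2*a+2, 2*b+2, 2*c) + x (2*a+2, 2*b, 2*c) * x (2*a, 2*b+2, 2*c)"
    "\<And>a b c. x (2*a+2, 2*b+1, 2*c+1) = (x (2*a+1, 2*b, 2*c+1) * x (2*a+1, 2*b+1, 2*c) + x (2*a, 2*b+1, 2*c+1) * x (2*a+2, 2*b, 2*c)) / x (2*a, 2*b, 2*c)"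
    "\<And>a b c. x (2*a+1, 2*b+2, 2*c+1) = (x (2*a, 2*b+1, 2*c+1) * x (2*a+1, 2*b+1, 2*c) + x (2*a+1, 2*b, 2*c+1) * x (2*a, 2*b+2, 2*c)) / x (2*a, 2*b, 2*c)"
    "\<And>a b c. x (2*a+1, 2*b+1, 2*c+2) = (x (2*a, 2*b+1, 2*c+1) * x (2*a+1, 2*b, 2*c+1) + x (2*a+1, 2*b+1, 2*c) * x (2*a, 2*b, 2*c+2)) / x (2*a, 2*b, 2*c)"
    "\<And>a b c. x (2*a+2, 2*b+2, 2*c+2) = (2 * x (2*a+2, 2*b, 2*c) * x (2*a, 2*b+2, 2*c) * x (2*a, 2*b, 2*c+2)
                    + x (2*a, 2*b, 2*c) * (x (2*a+2, 2*b, 2*c) * x (2*a, 2*b+2, 2*c+2) + x (2*a, 2*b+2, 2*c) * x (2*a+2, 2*b, 2*c+2) + x (2*a, 2*b, 2*c+2) * x (2*a+2, 2*b+2, 2*c))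
                    + 2 * x (2*a, 2*b+1, 2*c+1) * x (2*a+1, 2*b, 2*c+1) * x (2*a+1, 2*b+1, 2*c)) / (x (2*a, 2*b, 2*c))^2"
  using assms unfolding Khex_def Let_def by auto

lemma Khex_intro:
  assumes "\<And>a b c. x (2*a, 2*b, 2*c) \<noteq> 0"
    "\<And>a b c. (x (2*a, 2*b+1, 2*c+1))^2 =
                 x (2*a, 2*b, 2*c) * x (2*a, 2*b+2, 2*c+2) + x (2*a, 2*b+2, 2*c) * x (2*a, 2*b, 2*c+2)"
    "\<And>a b c. (x (2*a+1, 2*b, 2*c+1))^2 =
                 x (2*a, 2*b, 2*c) * x (2*a+2, 2*b, 2*c+2) + x (2*a+2, 2*b, 2*c) * x (2*a, 2*b, 2*c+2)"
    "\<And>a b c. (x (2*a+1, 2*b+1, 2*c))^2 =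
                 x (2*a, 2*b, 2*c) * x (2*a+2, 2*b+2, 2*c) + x (2*a+2, 2*b, 2*c) * x (2*a, 2*b+2, 2*c)"
    "\<And>a b c. x (2*a+2, 2*b+1, 2*c+1) = (x (2*a+1, 2*b, 2*c+1) * x (2*a+1, 2*b+1, 2*c) + x (2*a, 2*b+1, 2*c+1) * x (2*a+2, 2*b, 2*c)) / x (2*a, 2*b, 2*c)"
    "\<And>a b c. x (2*a+1, 2*b+2, 2*c+1) = (x (2*a, 2*b+1, 2*c+1) * x (2*a+1, 2*b+1, 2*c) + x (2*a+1, 2*b, 2*c+1) * x (2*a, 2*b+2, 2*c)) / x (2*a, 2*b, 2*c)"
    "\<And>a b c. x (2*a+1, 2*b+1, 2*c+2) = (x (2*a, 2*b+1, 2*c+1) * x (2*a+1, 2*b, 2*c+1) + x (2*a+1, 2*b+1, 2*c) * x (2*a, 2*b, 2*c+2)) / x (2*a, 2*b, 2*c)"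
    "\<And>a b c. x (2*a+2, 2*b+2, 2*c+2) = (2 * x (2*a+2, 2*b, 2*c) * x (2*a, 2*b+2, 2*c) * x (2*a, 2*b, 2*c+2)
                    + x (2*a, 2*b, 2*c) * (x (2*a+2, 2*b, 2*c) * x (2*a, 2*b+2, 2*c+2) + x (2*a, 2*b+2, 2*c) * x (2*a+2, 2*b, 2*c+2) + x (2*a, 2*b, 2*c+2) * x (2*a+2, 2*b+2, 2*c))
                    + 2 * x (2*a, 2*b+1, 2*c+1) * x (2*a+1, 2*b, 2*c+1) * x (2*a+1, 2*b+1, 2*c)) / (x (2*a, 2*b, 2*c))^2"
  shows "Khex x"
  unfolding Khex_def Let_def using assms by simp

lemma partA:
  fixes x y :: "int \<times> int \<times> int \<Rightarrow> complex"
  assumes nz: "\<forall>s. inL s \<longrightarrow> x s \<noteq> 0"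
    and hx: "Khex x"
    and sg: "\<forall>i. \<alpha> i \<in> {-1, 1} \<and> \<beta> i \<in> {-1, 1} \<and> \<gamma> i \<in> {-1, 1}"
    and st: "sign_twist x y \<alpha> \<beta> \<gamma>"
  shows "(\<forall>s. inL s \<longrightarrow> y s \<noteq> 0) \<and> Khex y"
proof
  have s0: "\<alpha> i \<noteq> 0" "\<beta> i \<noteq> 0" "\<gamma> i \<noteq> 0" for i using sg[rule_format, of i] by auto
  show "\<forall>s. inL s \<longrightarrow> y s \<noteq> 0"
  proof (intro allI impI)
    fix s assume "inL s"
    obtain p q r where s: "s = (p,q,r)" by (cases s) auto
    have xs: "x (p,q,r) \<noteq> 0" using nz \<open>inL s\<close> s by auto
    from inL_cases[of p q r] \<open>inL s\<close> s
    show "y s \<noteq> 0"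
      using xs s0 st_V[OF st, of p q r] st_F1[OF st, of p q r] st_F2[OF st, of p q r] st_F3[OF st, of p q r] s
      by auto
  qed
  note H = Khex_facts[OF hx]
  have sq: "\<alpha> i = 1 \<or> \<alpha> i = -1" "\<beta> i = 1 \<or> \<beta> i = -1" "\<gamma> i = 1 \<or> \<gamma> i = -1" for i
    using sg by auto
  show "Khex y"
  proof (rule Khex_intro)
    fix a b c
    show "y (2*a, 2*b, 2*c) \<noteq> 0" using H(1) st_V[OF st] by simp
    show "(y (2*a, 2*b+1, 2*c+1))^2 =
                 y (2*a, 2*b, 2*c) * y (2*a, 2*b+2, 2*c+2) + y (2*a, 2*b+2, 2*c) * y (2*a, 2*b, 2*c+2)"
      using H(2)[of a b c] sq[of b] sq[of c] by (auto simp: st_V[OF st] st_F1[OF st])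
    show "(y (2*a+1, 2*b, 2*c+1))^2 =
                 y (2*a, 2*b, 2*c) * y (2*a+2, 2*b, 2*c+2) + y (2*a+2, 2*b, 2*c) * y (2*a, 2*b, 2*c+2)"
      using H(3)[of a b c] sq[of a] sq[of c] by (auto simp: st_V[OF st] st_F2[OF st])
    show "(y (2*a+1, 2*b+1, 2*c))^2 =
                 y (2*a, 2*b, 2*c) * y (2*a+2, 2*b+2, 2*c) + y (2*a+2, 2*b, 2*c) * y (2*a, 2*b+2, 2*c)"
      using H(4)[of a b c] sq[of a] sq[of b] by (auto simp: st_V[OF st] st_F3[OF st])
    show "y (2*a+2, 2*b+1, 2*c+1) = (y (2*a+1, 2*b, 2*c+1) * y (2*a+1, 2*b+1, 2*c) + y (2*a, 2*b+1, 2*c+1) * y (2*a+2, 2*b, 2*c)) / y (2*a, 2*b, 2*c)"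
      using H(5)[of a b c] sq[of a] sq[of b] sq[of c]
      by (auto simp: st_V[OF st] st_F1[OF st] st_F2[OF st] st_F3[OF st] minus_divide_left)
    show "y (2*a+1, 2*b+2, 2*c+1) = (y (2*a, 2*b+1, 2*c+1) * y (2*a+1, 2*b+1, 2*c) + y (2*a+1, 2*b, 2*c+1) * y (2*a, 2*b+2, 2*c)) / y (2*a, 2*b, 2*c)"
      using H(6)[of a b c] sq[of a] sq[of b] sq[of c]
      by (auto simp: st_V[OF st] st_F1[OF st] st_F2[OF st] st_F3[OF st] minus_divide_left)
    show "y (2*a+1, 2*b+1, 2*c+2) = (y (2*a, 2*b+1, 2*c+1) * y (2*a+1, 2*b, 2*c+1) + y (2*a+1, 2*b+1, 2*c) * y (2*a, 2*b, 2*c+2)) / y (2*a, 2*b, 2*c)"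
      using H(7)[of a b c] sq[of a] sq[of b] sq[of c]
      by (auto simp: st_V[OF st] st_F1[OF st] st_F2[OF st] st_F3[OF st] minus_divide_left)
    show "y (2*a+2, 2*b+2, 2*c+2) = (2 * y (2*a+2, 2*b, 2*c) * y (2*a, 2*b+2, 2*c) * y (2*a, 2*b, 2*c+2)
                    + y (2*a, 2*b, 2*c) * (y (2*a+2, 2*b, 2*c) * y (2*a, 2*b+2, 2*c+2) + y (2*a, 2*b+2, 2*c) * y (2*a+2, 2*b, 2*c+2) + y (2*a, 2*b, 2*c+2) * y (2*a+2, 2*b+2, 2*c))
                    + 2 * y (2*a, 2*b+1, 2*c+1) * y (2*a+1, 2*b, 2*c+1) * y (2*a+1, 2*b+1, 2*c)) / (y (2*a, 2*b, 2*c))^2"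
      using H(8)[of a b c] sq[of a] sq[of b] sq[of c]
      by (auto simp: st_V[OF st] st_F1[OF st] st_F2[OF st] st_F3[OF st])
  qed
qed

lemma key2:
  fixes t u v w V X Y p1 p2 q1 q2 Yp1 Yp2 Yq1 Yq2 Vy :: complex
  assumes "t \<in> {-1,1}" "u \<in> {-1,1}" "v \<in> {-1,1}" "w \<in> {-1,1}"
    "V \<noteq> 0" "X \<noteq> 0" "p1 \<noteq> 0" "p2 \<noteq> 0" "q1 \<noteq> 0" "q2 \<noteq> 0"
    "X = (p1*p2+q1*q2)/V" "Y = (Yp1*Yp2+Yq1*Yq2)/Vy"
    "Y = t*X" "Yp1 = v*p1" "Yp2 = w*p2" "Yq1 = u*q1" "Yq2 = q2" "Vy = V"
  shows "t = u \<and> u = v*w \<and> v = u*w \<and> w = u*v"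
proof (rule key)
  show "t \<in> {-1,1}" "u \<in> {-1,1}" "v \<in> {-1,1}" "w \<in> {-1,1}" using assms by auto
  show "p1*p2 \<noteq> 0" "q1*q2 \<noteq> 0" using assms by auto
  have XV: "X * V = p1*p2+q1*q2" using assms(5,11) by simp
  show "p1*p2 + q1*q2 \<noteq> 0" using XV assms(5,6) by (metis mult_eq_0_iff)
  have "Y * V = Yp1*Yp2+Yq1*Yq2" using assms(5,12,18) by simp
  then have "t*X*V = v*w*(p1*p2) + u*(q1*q2)" using assms(13-17) by (simp add: algebra_simps)
  moreover have "t*(p1*p2 + q1*q2) = t*X*V" by (simp add: XV[symmetric] mult.assoc)
  ultimately show "t*(p1*p2 + q1*q2) = v*w*(p1*p2) + u*(q1*q2)" by simp
qed

lemma sq_sign: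
  fixes x y :: complex
  assumes "y^2 = x^2" "x \<noteq> 0"
  shows "y / x \<in> {-1,1}"
proof -
  have "(y/x)^2 = 1" using assms by (simp add: power_divide)
  then have "y/x = 1 \<or> y/x = -1" by (simp add: power2_eq_1_iff)
  then show ?thesis by blast
qed

lemma int_const:
  fixes f :: "int \<Rightarrow> 'a"
  assumes "\<And>a. f (a+1) = f a"
  shows "f a = f 0"
proof (induct a rule: int_induct[where k=0])
  case base then show ?case by simp
next
  case (step1 i) then show ?case using assms[of i] by simp
next
  case (step2 i) then show ?case using assms[of "i-1"] by simp
qed

lemma partB:
  fixes x y :: "int \<times> int \<times> int \<Rightarrow> complex"
  assumes nz: "\<forall>s. inL s \<longrightarrow> x s \<noteq> 0"
    and hx: "Khex x"
    and nzy: "\<forall>s. inL s \<longrightarrow> y s \<noteq> 0"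
    and hy: "Khex y"
    and vy: "\<forall>a b c. y (2*a, 2*b, 2*c) = x (2*a, 2*b, 2*c)"
  shows "\<exists>\<alpha> \<beta> \<gamma>. (\<forall>i. \<alpha> i \<in> {-1, 1} \<and> \<beta> i \<in> {-1, 1} \<and> \<gamma> i \<in> {-1, 1})
                         \<and> sign_twist x y \<alpha> \<beta> \<gamma>"
proof -
  define R where "R s = y s / x s" for s
  have xnz: "x (p,q,r) \<noteq> 0" if "even (p+q+r)" for p q r
    using nz that unfolding inL_def by auto
  have yR: "y (p,q,r) = R (p,q,r) * x (p,q,r)" if "even (p+q+r)" for p q r
    using xnz[OF that] unfolding R_def by simp
  have V: "y (p,q,r) = x (p,q,r)" if "even p" "even q" "even r" for p q r
    using that vy by (elim evenE) auto
  note Hx = Khex_facts[OF hx] and Hy = Khex_facts[OF hy]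
  define r1 where "r1 a b c = R (2*a, 2*b+1, 2*c+1)" for a b c
  define r2 where "r2 a b c = R (2*a+1, 2*b, 2*c+1)" for a b c
  define r3 where "r3 a b c = R (2*a+1, 2*b+1, 2*c)" for a b c
  have S1: "r1 a b c \<in> {-1,1}" for a b c
    unfolding r1_def R_def
    by (rule sq_sign) (use Hy(2)[of a b c] Hx(2)[of a b c] V xnz in auto)
  have S2: "r2 a b c \<in> {-1,1}" for a b c
    unfolding r2_def R_def
    by (rule sq_sign) (use Hy(3)[of a b c] Hx(3)[of a b c] V xnz in auto)
  have S3: "r3 a b c \<in> {-1,1}" for a b c
    unfolding r3_def R_def
    by (rule sq_sign) (use Hy(4)[of a b c] Hx(4)[of a b c] V xnz in auto)
  have K1: "r1 (a+1) b c = r1 a b c \<and> r1 a b c = r2 a b c * r3 a b c \<and> r2 a b c = r1 a b c * r3 a b c \<and> r3 a b c = r1 a b c * r2 a b c" for a b c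
  proof -
    have "R (2*a+2, 2*b+1, 2*c+1) = r1 a b c \<and> r1 a b c = r2 a b c * r3 a b c \<and> r2 a b c = r1 a b c * r3 a b c \<and> r3 a b c = r1 a b c * r2 a b c"
    proof (rule key2[OF _ S1 S2 S3 _ _ _ _ _ _ Hx(5)[of a b c] Hy(5)[of a b c]])
      show "R (2*a+2, 2*b+1, 2*c+1) \<in> {-1,1}" using S1[of "a+1" b c] by (simp add: r1_def distrib_left)
    qed (unfold r1_def r2_def r3_def, (rule xnz yR V; simp)+)
    moreover have "R (2*a+2, 2*b+1, 2*c+1) = r1 (a+1) b c" by (simp add: r1_def distrib_left)
    ultimately show ?thesis by metis
  qed
  have K2: "r2 a (b+1) c = r2 a b c" for a b c
  proof -
    have "R (2*a+1, 2*b+2, 2*c+1) = r2 a b c \<and> r2 a b c = r1 a b c * r3 a b c \<and> r1 a b c = r2 a b c * r3 a b c \<and> r3 a b c = r2 a b c * r1 a b c"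
    proof (rule key2[OF _ S2 S1 S3 _ _ _ _ _ _ Hx(6)[of a b c] Hy(6)[of a b c]])
      show "R (2*a+1, 2*b+2, 2*c+1) \<in> {-1,1}" using S2[of a "b+1" c] by (simp add: r2_def distrib_left)
    qed (unfold r1_def r2_def r3_def, (rule xnz yR V; simp)+)
    moreover have "R (2*a+1, 2*b+2, 2*c+1) = r2 a (b+1) c" by (simp add: r2_def distrib_left)
    ultimately show ?thesis by metis
  qed
  have K3: "r3 a b (c+1) = r3 a b c" for a b c
  proof -
    have "R (2*a+1, 2*b+1, 2*c+2) = r3 a b c \<and> r3 a b c = r1 a b c * r2 a b c \<and> r1 a b c = r3 a b c * r2 a b c \<and> r2 a b c = r3 a b c * r1 a b c"
    proof (rule key2[OF _ S3 S1 S2 _ _ _ _ _ _ Hx(7)[of a b c] Hy(7)[of a b c]])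
      show "R (2*a+1, 2*b+1, 2*c+2) \<in> {-1,1}" using S3[of a b "c+1"] by (simp add: r3_def distrib_left)
    qed (unfold r1_def r2_def r3_def, (rule xnz yR V; simp)+)
    moreover have "R (2*a+1, 2*b+1, 2*c+2) = r3 a b (c+1)" by (simp add: r3_def distrib_left)
    ultimately show ?thesis by metis
  qed
  have I1: "r1 a b c = r1 0 b c" for a b c
    using int_const[of "\<lambda>a. r1 a b c", OF K1[THEN conjunct1]] by simp
  have I2: "r2 a b c = r2 a 0 c" for a b c
    using int_const[of "\<lambda>b. r2 a b c", OF K2] by simp
  have I3: "r3 a b c = r3 a b 0" for a b c
    using int_const[of "\<lambda>c. r3 a b c", OF K3] by simp
  note M1 = K1[THEN conjunct2, THEN conjunct1]
  note M2 = K1[THEN conjunct2, THEN conjunct2, THEN conjunct1]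
  note M3 = K1[THEN conjunct2, THEN conjunct2, THEN conjunct2]
  have Q3: "r3 a b c * r3 a b c = 1" for a b c using S3[of a b c] by auto
  define \<alpha> where "\<alpha> a = r2 0 0 0 * r2 a 0 0" for a
  define \<beta> where "\<beta> b = r3 0 b 0" for b
  define \<gamma> where "\<gamma> c = r2 0 0 c" for c
  have E1: "r1 a b c = \<beta> b * \<gamma> c" for a b c
  proof -
    have "r1 a b c = r2 0 b c * r3 0 b c" using I1 M1 by metis
    also have "\<dots> = r2 0 0 c * r3 0 b 0" using I2 I3 by metis
    finally show ?thesis unfolding \<beta>_def \<gamma>_def by simp
  qed
  have E2: "r2 a b c = \<alpha> a * \<gamma> c" for a b c
  proof -
    have "r2 a b c = r1 0 0 c * r3 a 0 0" using I2 M2 I1 I3 by metis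
    also have "r1 0 0 c = r2 0 0 c * r3 0 0 0" using M1 I3 by metis
    also have "r3 a 0 0 = r2 0 0 0 * r3 0 0 0 * r2 a 0 0" using M3 I1 M1 by metis
    finally have "r2 a b c = r2 0 0 c * r2 0 0 0 * r2 a 0 0 * (r3 0 0 0 * r3 0 0 0)"
      by (simp add: algebra_simps)
    then show ?thesis unfolding \<alpha>_def \<gamma>_def using Q3 by (simp add: algebra_simps)
  qed
  have E3: "r3 a b c = \<alpha> a * \<beta> b" for a b c
  proof -
    have "r3 a b c = r1 0 b 0 * r2 a 0 0" using I3 M3 I1 I2 by metis
    also have "r1 0 b 0 = r2 0 0 0 * r3 0 b 0" using M1 I2 by metis
    finally show ?thesis unfolding \<alpha>_def \<beta>_def by (simp add: algebra_simps)
  qed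
  show ?thesis
  proof (intro exI conjI allI)
    fix i
    show "\<alpha> i \<in> {-1,1}" "\<beta> i \<in> {-1,1}" "\<gamma> i \<in> {-1,1}"
      unfolding \<alpha>_def \<beta>_def \<gamma>_def using S2[of 0 0 0] S2[of i 0 0] S3[of 0 i 0] S2[of 0 0 i] by auto
  next
    show "sign_twist x y \<alpha> \<beta> \<gamma>"
      unfolding sign_twist_def
    proof (intro allI conjI)
      fix a b c
      show "y (2*a, 2*b, 2*c) = x (2*a, 2*b, 2*c)" using vy by blast
      show "y (2*a, 2*b+1, 2*c+1) = \<beta> b * \<gamma> c * x (2*a, 2*b+1, 2*c+1)"
        using yR[of "2*a" "2*b+1" "2*c+1"] E1[of a b c] unfolding r1_def by simp
      show "y (2*a+1, 2*b, 2*c+1) = \<alpha> a * \<gamma> c * x (2*a+1, 2*b, 2*c+1)"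
        using yR[of "2*a+1" "2*b" "2*c+1"] E2[of a b c] unfolding r2_def by simp
      show "y (2*a+1, 2*b+1, 2*c) = \<alpha> a * \<beta> b * x (2*a+1, 2*b+1, 2*c)"
        using yR[of "2*a+1" "2*b+1" "2*c"] E3[of a b c] unfolding r3_def by simp
    qed
  qed
qed

theorem theorem2p23:
  fixes x :: "int \<times> int \<times> int \<Rightarrow> complex"
  assumes nz: "\<forall>s. inL s \<longrightarrow> x s \<noteq> 0"
    and hx: "Khex x"
  shows "(\<forall>(\<alpha>::int \<Rightarrow> complex) \<beta> \<gamma> y.
            (\<forall>i. \<alpha> i \<in> {-1, 1} \<and> \<beta> i \<in> {-1, 1} \<and> \<gamma> i \<in> {-1, 1}) \<and> sign_twist x y \<alpha> \<beta> \<gamma>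
            \<longrightarrow> (\<forall>s. inL s \<longrightarrow> y s \<noteq> 0) \<and> Khex y)
       \<and> (\<forall>y. (\<forall>s. inL s \<longrightarrow> y s \<noteq> 0) \<and> Khex y \<and> (\<forall>a b c. y (2*a, 2*b, 2*c) = x (2*a, 2*b, 2*c))
            \<longrightarrow> (\<exists>\<alpha> \<beta> \<gamma>. (\<forall>i. \<alpha> i \<in> {-1, 1} \<and> \<beta> i \<in> {-1, 1} \<and> \<gamma> i \<in> {-1, 1})
                         \<and> sign_twist x y \<alpha> \<beta> \<gamma>))"
  using partA[OF nz hx] partB[OF nz hx] by blast

end
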